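(* Under the setting of the context (with $\boldsymbol{Z}_a=[\boldsymbol{Z}_r\ \boldsymbol{Z}_u]$ of full column rank and arbitrary $\boldsymbol{w}_{\mathrm{init}}\in\mathbb{R}^D$, $\boldsymbol{y}_r\in\mathbb{R}^{N_r}$, $\boldsymbol{y}_u\in\mathbb{R}^{N_u}$), if the forgetting labels are set to $$\tilde{\boldsymbol{y}}_u=\boldsymbol{Z}_u^\top\big(\boldsymbol{\Pi}_r(\boldsymbol{w}_p-\boldsymbol{w}_{\mathrm{init}})+\boldsymbol{w}_{\mathrm{init}}\big),$$ then $\boldsymbol{w}_u=\boldsymbol{w}_r$.
   Context: Setting (over-parameterized linear model trained to interpolation / minimum-distance solutions). Given $\boldsymbol{Z}_r\in\mathbb{R}^{D\times N_r}$ (features of remaining data), $\boldsymbol{Z}_u\in\mathbb{R}^{D\times N_u}$ (features of forgetting data), with $\boldsymbol{Z}_a=[\boldsymbol{Z}_r\ \boldsymbol{Z}_u]$ of full column rank. Write $\boldsymbol{y}_a=[\boldsymbol{y}_r;\boldsymbol{y}_u]\in\mathbb{R}^{N_r+N_u}$ (original labels) and $\tilde{\boldsymbol{y}}_a=[\boldsymbol{y}_r;\tilde{\boldsymbol{y}}_u]$ (labels with the forgetting part replaced by $\tilde{\boldsymbol{y}}_u$). Define $\boldsymbol{w}_p=\boldsymbol{w}_{\mathrm{init}}+\boldsymbol{Z}_a(\boldsymbol{Z}_a^\top\boldsymbol{Z}_a)^{-1}(\boldsymbol{y}_a-\boldsymbol{Z}_a^\top\boldsymbol{w}_{\mathrm{init}})$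 (pre-trained model), $\boldsymbol{w}_u=\boldsymbol{w}_p+\boldsymbol{Z}_a(\boldsymbol{Z}_a^\top\boldsymbol{Z}_a)^{-1}(\tilde{\boldsymbol{y}}_a-\boldsymbol{Z}_a^\top\boldsymbol{w}_p)$ (unlearned model), $\boldsymbol{w}_r=\boldsymbol{w}_{\mathrm{init}}+\boldsymbol{Z}_r(\boldsymbol{Z}_r^\top\boldsymbol{Z}_r)^{-1}(\boldsymbol{y}_r-\boldsymbol{Z}_r^\top\boldsymbol{w}_{\mathrm{init}})$ (retrained model). Let $\boldsymbol{\Pi}_r=\boldsymbol{Z}_r(\boldsymbol{Z}_r^\top\boldsymbol{Z}_r)^{-1}\boldsymbol{Z}_r^\top$. *)

theory Defs
  imports "HOL-Analysis.Analysis"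
begin

definition hcat :: "real^'r^'d \<Rightarrow> real^'u^'d \<Rightarrow> real^('r + 'u)^'d" where
  "hcat Zr Zu = (\<chi> i j. case j of Inl a \<Rightarrow> Zr $ i $ a | Inr b \<Rightarrow> Zu $ i $ b)"

definition vcat :: "real^'r \<Rightarrow> real^'u \<Rightarrow> real^('r + 'u)" where
  "vcat yr yu = (\<chi> j. case j of Inl a \<Rightarrow> yr $ a | Inr b \<Rightarrow> yu $ b)"

definition min_dist_update :: "real^'d \<Rightarrow> real^'n^'d \<Rightarrow> real^'n \<Rightarrow> real^'d" where
  "min_dist_update w Z y =
     w + Z *v (matrix_inv (transpose Z ** Z) *v (y - transpose Z *v w))"

definition proj_mat :: "real^'n^'d \<Rightarrow> real^'d^'d" where
  "proj_mat Z = Z ** matrix_inv (transpose Z ** Z) ** transpose Z"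

end

theory Submission
  imports Defs
begin

lemma sum_UNIV_Plus:
  fixes f :: "('a::finite + 'b::finite) \<Rightarrow> real"
  shows "sum f UNIV = (\<Sum>a\<in>UNIV. f (Inl a)) + (\<Sum>b\<in>UNIV. f (Inr b))"
proof -
  have "sum f (UNIV <+> UNIV) = sum (f \<circ> Inl) UNIV + sum (f \<circ> Inr) UNIV"
    by (rule sum.Plus) auto
  then show ?thesis by simp
qed

lemma hcat_mult_vcat:
  "hcat Zr Zu *v vcat x y = Zr *v x + Zu *v y"
  by (simp add: vec_eq_iff matrix_vector_mult_def hcat_def vcat_def sum_UNIV_Plus)

lemma transpose_hcat_mult:
  "transpose (hcat Zr Zu) *v v = vcat (transpose Zr *v v) (transpose Zu *v v)"
  by (simp add: vec_eq_iff matrix_vector_mult_def hcat_def vcat_def transpose_def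
      split: sum.split)

lemma vcat_eq: "vcat a b = vcat c d \<Longrightarrow> a = c \<and> b = d"
  unfolding vcat_def vec_eq_iff
  by (metis (no_types, lifting) sum.case vec_lambda_beta)

lemma gram_invertible:
  fixes Z :: "real^'n^'d"
  assumes "inj ((*v) Z)"
  shows "invertible (transpose Z ** Z)"
proof -
  have "inj ((*v) (transpose Z ** Z))"
  proof (rule linear_injective_0[THEN iffD2])
    show "linear ((*v) (transpose Z ** Z))" by (rule matrix_vector_mul_linear)
    show "\<forall>x. (transpose Z ** Z) *v x = 0 \<longrightarrow> x = 0"
    proof (intro allI impI)
      fix x assume h: "(transpose Z ** Z) *v x = 0"
      have "inner (Z *v x) (Z *v x) = inner x (transpose Z *v (Z *v x))"
        by (metis dot_lmul_matrix transpose_matrix_vector inner_commute)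
      also have "\<dots> = 0" using h by (simp add: matrix_vector_mul_assoc)
      finally have "Z *v x = 0" by simp
      then show "x = 0" using assms by (metis injD matrix_vector_mult_0_right)
    qed
  qed
  then show ?thesis
    using invertible_left_inverse matrix_left_invertible_injective by blast
qed

lemma inv_right: "invertible A \<Longrightarrow> A ** matrix_inv A = mat 1"
  unfolding invertible_def matrix_inv_def by (metis (mono_tags, lifting) someI_ex)

lemma mdu_interp:
  fixes Z :: "real^'n^'d"
  assumes "invertible (transpose Z ** Z)"
  shows "transpose Z *v min_dist_update w Z y = y"
proof -
  have "transpose Z *v (Z *v (matrix_inv (transpose Z ** Z) *v (y - transpose Z *v w)))
        = y - transpose Z *v w"
    by (simp add: matrix_vector_mul_assoc inv_right[OF assms] matrix_mul_assoc)
  then show ?thesis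
    by (simp add: min_dist_update_def matrix_vector_right_distrib)
qed

lemma mdu_range:
  "\<exists>c. min_dist_update w Z y - w = Z *v c"
  by (auto simp: min_dist_update_def)

theorem corollary1:
  fixes Zr :: "real^'nr^'d" and Zu :: "real^'nu^'d"
    and w_init :: "real^'d" and yr :: "real^'nr" and yu :: "real^'nu"
  assumes full_rank: "rank (hcat Zr Zu) = CARD('nr + 'nu)"
  shows "let Za = hcat Zr Zu;
             wp = min_dist_update w_init Za (vcat yr yu);
             yu_tilde = transpose Zu *v (proj_mat Zr *v (wp - w_init) + w_init);
             wu = min_dist_update wp Za (vcat yr yu_tilde);
             wr = min_dist_update w_init Zr yr
         in wu = wr"
proof -
  define Za where "Za = hcat Zr Zu"
  define wp where "wp = min_dist_update w_init Za (vcat yr yu)"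
  define yt where "yt = transpose Zu *v (proj_mat Zr *v (wp - w_init) + w_init)"
  define wu where "wu = min_dist_update wp Za (vcat yr yt)"
  define wr where "wr = min_dist_update w_init Zr yr"
  have injA: "inj ((*v) Za)" using full_rank full_rank_injective Za_def by blast
  have injR: "inj ((*v) Zr)"
  proof (rule injI)
    fix x y assume "Zr *v x = Zr *v y"
    then have "Za *v vcat x 0 = Za *v vcat y 0" by (simp add: Za_def hcat_mult_vcat)
    then have "vcat x (0::real^'nu) = vcat y 0" using injA by (simp add: inj_eq)
    then show "x = y" using vcat_eq by blast
  qed
  have GA: "invertible (transpose Za ** Za)" by (rule gram_invertible[OF injA])
  have GR: "invertible (transpose Zr ** Zr)" by (rule gram_invertible[OF injR])
  have wp_i: "transpose Za *v wp = vcat yr yu" unfolding wp_def by (rule mdu_interp[OF GA])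
  then have wpr: "transpose Zr *v wp = yr"
    unfolding Za_def transpose_hcat_mult using vcat_eq by blast
  have wr_i: "transpose Zr *v wr = yr" unfolding wr_def by (rule mdu_interp[OF GR])
  have "proj_mat Zr *v (wp - w_init) = wr - w_init"
    using wpr by (simp add: proj_mat_def wr_def min_dist_update_def matrix_vector_mul_assoc[symmetric]
        matrix_vector_mult_diff_distrib)
  then have yt: "yt = transpose Zu *v wr" by (simp add: yt_def)
  have wu_i: "transpose Za *v wu = vcat yr yt" unfolding wu_def by (rule mdu_interp[OF GA])
  have wr_a: "transpose Za *v wr = vcat yr yt"
    unfolding Za_def transpose_hcat_mult wr_i yt ..
  obtain a where a: "wu - wp = Za *v a" using mdu_range wu_def by blast
  obtain b where b: "wp - w_init = Za *v b" using mdu_range wp_def by blast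
  obtain c where c: "wr - w_init = Zr *v c" using mdu_range wr_def by blast
  have c': "wr - w_init = Za *v vcat c 0" by (simp add: c Za_def hcat_mult_vcat)
  have "wu - wr = (wu - wp) + (wp - w_init) - (wr - w_init)" by simp
  also have "\<dots> = Za *v (a + b - vcat c 0)"
    by (simp add: a b c' matrix_vector_right_distrib matrix_vector_mult_diff_distrib)
  finally have v: "wu - wr = Za *v (a + b - vcat c 0)" .
  have z: "transpose Za *v (wu - wr) = 0"
    using wu_i wr_a by (simp add: matrix_vector_mult_diff_distrib)
  have "inner (wu - wr) (wu - wr) = inner (a + b - vcat c 0) (transpose Za *v (wu - wr))"
    by (metis v dot_lmul_matrix transpose_matrix_vector inner_commute)
  also have "\<dots> = 0" using z by simp
  finally have "wu = wr" by simp
  then show ?thesis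
    unfolding Let_def Za_def[symmetric] wp_def[symmetric] yt_def[symmetric] wu_def[symmetric]
      wr_def[symmetric] .
qed

end
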